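(* Let $H \subset L$ be light-cone regular and let $h_0$ be a minimal element of $H$ with respect to $\le$. Then $H' = H \setminus \{h_0\}$ is light-cone regular. In particular, if $h \in H$ satisfies $h_0 \le h$ and $h_0 \neq h$, then $d_{H'}(h) < d_H(h)$.
   Context: Let $L$ be a finitely generated $\mathbb{Z}$-module and $v_1,\dots,v_N\in L$ distinct elements linearly independent over $\mathbb{Z}_{\ge 0}$ (i.e. $\sum_i a_i v_i=0$ with all $a_i\in\mathbb{Z}_{\ge0}$ forces all $a_i=0$). Let $S=\{\sum_i a_iv_i : a_i\in\mathbb{Z}_{\ge0}\}$ and define the partial order $h_1\le h_2$ iff $h_1-h_2\in S$. A nonempty subset $H\subset L$ is light-cone regular if for every $h\in H$ the set $\{h'\in H: h'\le h\}$ is finite and $\{h'\in L: h'\ge h\}\subset H$. For a light-cone regular $H$ and $h\in H$, $d_H(h)=\#\{h'\in H \mid h'\le h\}$. *)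

theory Defs
  imports Main
begin

definition nsmul :: "nat \<Rightarrow> 'a::ab_group_add \<Rightarrow> 'a" where
  "nsmul k x = (((+) x) ^^ k) 0"

definition zsmul :: "int \<Rightarrow> 'a::ab_group_add \<Rightarrow> 'a" where
  "zsmul k x = (if k \<ge> 0 then nsmul (nat k) x else - nsmul (nat (- k)) x)"

definition fin_gen_Z_module :: "'a::ab_group_add itself \<Rightarrow> bool" where
  "fin_gen_Z_module _ \<longleftrightarrow>
     (\<exists>G::'a set. finite G \<and> (\<forall>x::'a. \<exists>c::'a \<Rightarrow> int. x = (\<Sum>g\<in>G. zsmul (c g) g)))"

definition pos_lin_indep :: "nat \<Rightarrow> (nat \<Rightarrow> 'a::ab_group_add) \<Rightarrow> bool" where
  "pos_lin_indep N v \<longleftrightarrow>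
     (\<forall>a::nat \<Rightarrow> nat. (\<Sum>i<N. nsmul (a i) (v i)) = 0 \<longrightarrow> (\<forall>i<N. a i = 0))"

definition cone :: "nat \<Rightarrow> (nat \<Rightarrow> 'a::ab_group_add) \<Rightarrow> 'a set" where
  "cone N v = {x. \<exists>a::nat \<Rightarrow> nat. x = (\<Sum>i<N. nsmul (a i) (v i))}"

definition lc_le :: "nat \<Rightarrow> (nat \<Rightarrow> 'a::ab_group_add) \<Rightarrow> 'a \<Rightarrow> 'a \<Rightarrow> bool" where
  "lc_le N v h1 h2 \<longleftrightarrow> h1 - h2 \<in> cone N v"

definition light_cone_regular :: "nat \<Rightarrow> (nat \<Rightarrow> 'a::ab_group_add) \<Rightarrow> 'a set \<Rightarrow> bool" where
  "light_cone_regular N v H \<longleftrightarrow>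
     H \<noteq> {} \<and>
     (\<forall>h\<in>H. finite {h'\<in>H. lc_le N v h' h}) \<and>
     (\<forall>h\<in>H. {h'. lc_le N v h h'} \<subseteq> H)"

definition dH :: "nat \<Rightarrow> (nat \<Rightarrow> 'a::ab_group_add) \<Rightarrow> 'a set \<Rightarrow> 'a \<Rightarrow> nat" where
  "dH N v H h = card {h'\<in>H. lc_le N v h' h}"

end

theory Submission
  imports Defs
begin

lemma nsmul0: "nsmul 0 x = 0" by (simp add: nsmul_def)
lemma nsmul1: "nsmul (Suc 0) x = x" by (simp add: nsmul_def)

lemma sum_single:
  fixes N :: nat and v :: "nat \<Rightarrow> 'a::ab_group_add"
  assumes "N \<ge> 1"
  shows "(\<Sum>i<N. nsmul (if i = 0 then Suc 0 else 0) (v i)) = v 0"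
proof -
  have "(\<Sum>i<N. nsmul (if i = 0 then Suc 0 else 0) (v i)) = (\<Sum>i<N. if i = 0 then v i else 0)"
    by (rule sum.cong) (simp_all add: nsmul0 nsmul1)
  also have "\<dots> = v 0" using assms by (subst sum.delta) auto
  finally show ?thesis .
qed

lemma v0_nz:
  fixes N :: nat and v :: "nat \<Rightarrow> 'a::ab_group_add"
  assumes "N \<ge> 1" "pos_lin_indep N v"
  shows "v 0 \<noteq> 0"
proof
  assume z: "v 0 = 0"
  have "(\<Sum>i<N. nsmul ((\<lambda>i. if i = 0 then Suc 0 else 0) i) (v i)) = 0"
    using sum_single[OF assms(1), of v] z by simp
  moreover have "(\<Sum>i<N. nsmul ((\<lambda>i. if i = 0 then Suc 0 else 0) i) (v i)) = 0 \<longrightarrow> (\<forall>i<N. (\<lambda>i::nat. if i = 0 then Suc 0 else 0) i = 0)"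
    using assms(2) unfolding pos_lin_indep_def by (rule spec)
  ultimately have "\<forall>i<N. (\<lambda>i::nat. if i = 0 then Suc 0 else (0::nat)) i = 0" by blast
  then have "(\<lambda>i::nat. if i = 0 then Suc 0 else (0::nat)) 0 = 0" using assms(1) by auto
  then show False by simp
qed

lemma v0_cone:
  fixes N :: nat and v :: "nat \<Rightarrow> 'a::ab_group_add"
  assumes "N \<ge> 1"
  shows "v 0 \<in> cone N v"
proof -
  have "v 0 = (\<Sum>i<N. nsmul ((\<lambda>i::nat. if i = 0 then Suc 0 else 0) i) (v i))"
    using sum_single[OF assms, of v] by simp
  then have "\<exists>a::nat \<Rightarrow> nat. v 0 = (\<Sum>i<N. nsmul (a i) (v i))" by (rule exI[where x="\<lambda>i::nat. if i = 0 then Suc 0 else 0"])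
  then show ?thesis unfolding cone_def by simp
qed

theorem lemma3p9:
  fixes N :: nat and v :: "nat \<Rightarrow> 'a::ab_group_add" and H :: "'a set" and h0 :: 'a
  assumes fg: "fin_gen_Z_module TYPE('a)"
    and N_pos: "N \<ge> 1"
    and dist: "inj_on v {..<N}"
    and indep: "pos_lin_indep N v"
    and reg: "light_cone_regular N v H"
    and h0_in: "h0 \<in> H"
    and h0_min: "\<forall>h\<in>H. lc_le N v h h0 \<longrightarrow> h = h0"
  shows "light_cone_regular N v (H - {h0})
    \<and> (\<forall>h\<in>H. lc_le N v h0 h \<and> h0 \<noteq> h \<longrightarrow> dH N v (H - {h0}) h < dH N v H h)"
proof
  have le1: "lc_le N v h0 (h0 - v 0)" using v0_cone[OF N_pos] by (simp add: lc_le_def)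
  have "h0 - v 0 \<in> H" using reg h0_in le1 unfolding light_cone_regular_def by blast
  moreover have "h0 - v 0 \<noteq> h0" using v0_nz[OF N_pos indep] by simp
  ultimately have ne: "H - {h0} \<noteq> {}" by blast
  have fin: "\<forall>h\<in>H - {h0}. finite {h'\<in>H - {h0}. lc_le N v h' h}"
  proof
    fix h assume "h \<in> H - {h0}"
    then have "finite {h'\<in>H. lc_le N v h' h}" using reg unfolding light_cone_regular_def by blast
    then show "finite {h'\<in>H - {h0}. lc_le N v h' h}" by (rule finite_subset[rotated]) auto
  qed
  have up: "\<forall>h\<in>H - {h0}. {h'. lc_le N v h h'} \<subseteq> H - {h0}"
  proof (intro ballI subsetI)
    fix h h' assume h: "h \<in> H - {h0}" and "h' \<in> {h'. lc_le N v h h'}"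
    then have l: "lc_le N v h h'" by simp
    then have "h' \<in> H" using reg h unfolding light_cone_regular_def by blast
    moreover have "h' \<noteq> h0" using h0_min h l by auto
    ultimately show "h' \<in> H - {h0}" by simp
  qed
  show "light_cone_regular N v (H - {h0})" using ne fin up unfolding light_cone_regular_def by blast
  show "\<forall>h\<in>H. lc_le N v h0 h \<and> h0 \<noteq> h \<longrightarrow> dH N v (H - {h0}) h < dH N v H h"
  proof (intro ballI impI)
    fix h assume h: "h \<in> H" and c: "lc_le N v h0 h \<and> h0 \<noteq> h"
    have f: "finite {h'\<in>H. lc_le N v h' h}" using reg h unfolding light_cone_regular_def by blast
    have eq: "{h'\<in>H - {h0}. lc_le N v h' h} = {h'\<in>H. lc_le N v h' h} - {h0}" by auto
    have "h0 \<in> {h'\<in>H. lc_le N v h' h}" using h0_in c by simp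
    then show "dH N v (H - {h0}) h < dH N v H h" unfolding dH_def eq
      by (rule card_Diff1_less[OF f])
  qed
qed

end
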